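(* Let $Y\colon\mathbb V^N\times\mathbb G^N\to\mathbb R^N$ be a component balanced allocation rule on the class of network games. Then its standard extension $\Psi^Y$ is component balanced, i.e., for every $(v,\rho)\in\mathbb V^N\times\mathbb P^N$ with $v$ component additive and every component $h\in C(g(\rho))$, $\sum_{i\in N(h)}\Psi^Y_i(v,\rho)=\sum_{g\in\mathbb G(\rho)}\rho(g)\cdot v(g\cap h)$.
   Context: $N=\{1,\dots,n\}$ is a finite player set. A link is an unordered pair $ij$ of distinct players; $g_N$ is the set of all links; a network is any $g\subseteq g_N$; $\mathbb G^N$ is the set of all networks. For a network $g$, $N(g)$ is the set of players with at least one link in $g$ and $N_0(g)=N\setminus N(g)$. A component of $g$ is a nonempty subnetwork $h\subseteq g$ that is connected (any two players of $N(h)$ are joined by a path in $h$) and maximal (if $i\in N(h)$ and $ij\in g$ then $ij\in h$); $C(g)$ is the set of components of $g$. A network game is $v\colon\mathbb G^N\to\mathbb R$ with $v(\varnothing)=0$; $\mathbb V^N$ is the set of these; $v$ is component additive if $v(g)=\sum_{h\in C(g)}v(h)$ for all $g$. A network formation probability distribution is $\rho\colon\mathbb G^N\to[0,1]$ with $\sum_g\rho(g)=1$; $\mathbb P^N$ is the set of these; $\mathbb G(\rho)=\{g:\rho(g)>0\}$ and the extent is $g(\rho)=\bigcup_{g\in\mathbb G(\rho)}g$. An allocation rule on network games is a map $Y\colon\mathbb V^N\times\mathbb G^N\to\mathbb R^N$ with $Y_i(v,g)=0$ for every $i\in N_0(g)$; it is component balanced if for every component additive $v$, every network $g$ and every $h\in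 C(g)$, $\sum_{i\in N(h)}Y_i(v,g)=v(h)$. Its standard extension is $\Psi^Y(v,\rho)=\sum_{g\in\mathbb G^N}\rho(g)\,Y(v,g)$. *)

theory Defs
  imports Complex_Main
begin

text \<open>Players are the elements of a finite type 'n (so N = UNIV).
  A link is an unordered pair of distinct players, i.e. a 2-element set.\<close>

type_synonym 'n network = "'n set set"
type_synonym 'n game = "'n network \<Rightarrow> real"
type_synonym 'n alloc_rule = "'n game \<Rightarrow> 'n network \<Rightarrow> 'n \<Rightarrow> real"

definition links :: "'n set set" where
  "links = {l. \<exists>i j. i \<noteq> j \<and> l = {i, j}}"

definition networks :: "'n network set" where
  "networks = Pow links"

definition net_players :: "'n network \<Rightarrow> 'n set" where
  "net_players g = \<Union> g"

definition isolated :: "'n network \<Rightarrow> 'n set" where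
  "isolated g = UNIV - net_players g"

definition adj :: "'n network \<Rightarrow> ('n \<times> 'n) set" where
  "adj h = {(i, j). {i, j} \<in> h}"

definition connected_net :: "'n network \<Rightarrow> bool" where
  "connected_net h \<longleftrightarrow> (\<forall>i\<in>net_players h. \<forall>j\<in>net_players h. (i, j) \<in> (adj h)\<^sup>*)"

definition is_component :: "'n network \<Rightarrow> 'n network \<Rightarrow> bool" where
  "is_component h g \<longleftrightarrow> h \<noteq> {} \<and> h \<subseteq> g \<and> connected_net h \<and>
     (\<forall>i j. i \<in> net_players h \<longrightarrow> {i, j} \<in> g \<longrightarrow> {i, j} \<in> h)"

definition components :: "'n network \<Rightarrow> 'n network set" where
  "components g = {h. is_component h g}"

definition network_game :: "'n game \<Rightarrow> bool" where
  "network_game v \<longleftrightarrow> v {} = 0"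

definition component_additive :: "'n game \<Rightarrow> bool" where
  "component_additive v \<longleftrightarrow>
     (\<forall>g\<in>networks. v g = (\<Sum>h\<in>components g. v h))"

definition nfpd :: "('n network \<Rightarrow> real) \<Rightarrow> bool" where
  "nfpd \<rho> \<longleftrightarrow> (\<forall>g. 0 \<le> \<rho> g \<and> \<rho> g \<le> 1) \<and> (\<forall>g. g \<notin> networks \<longrightarrow> \<rho> g = 0)
      \<and> (\<Sum>g\<in>networks. \<rho> g) = 1"

definition support :: "('n network \<Rightarrow> real) \<Rightarrow> 'n network set" where
  "support \<rho> = {g \<in> networks. \<rho> g > 0}"

definition extent :: "('n network \<Rightarrow> real) \<Rightarrow> 'n network" where
  "extent \<rho> = \<Union> (support \<rho>)"

definition allocation_rule :: "('n::finite) alloc_rule \<Rightarrow> bool" where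
  "allocation_rule Y \<longleftrightarrow>
     (\<forall>v g i. network_game v \<longrightarrow> g \<in> networks \<longrightarrow> i \<in> isolated g \<longrightarrow> Y v g i = 0)"

definition component_balanced :: "('n::finite) alloc_rule \<Rightarrow> bool" where
  "component_balanced Y \<longleftrightarrow>
     (\<forall>v g h. network_game v \<longrightarrow> component_additive v \<longrightarrow> g \<in> networks \<longrightarrow>
        h \<in> components g \<longrightarrow> (\<Sum>i\<in>net_players h. Y v g i) = v h)"

definition standard_extension ::
  "('n::finite) alloc_rule \<Rightarrow> 'n game \<Rightarrow> ('n network \<Rightarrow> real) \<Rightarrow> 'n \<Rightarrow> real" where
  "standard_extension Y v \<rho> i = (\<Sum>g\<in>networks. \<rho> g * Y v g i)"

end

theory Submission
  imports Defs
begin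

lemma link_form: "l \<in> links \<Longrightarrow> \<exists>a b. l = {a, b}"
  unfolding links_def by auto

lemma adj_sym: "sym (adj g)"
  unfolding adj_def sym_def by (auto simp: insert_commute)

lemma comp_sub:
  assumes gE: "g \<subseteq> E" and hE: "is_component h E" and cg: "is_component c g"
    and i1: "i \<in> net_players c" and i2: "i \<in> net_players h" and El: "E \<subseteq> links"
  shows "c \<subseteq> h"
proof
  fix l assume l: "l \<in> c"
  have reach: "x \<in> net_players h" if "(i, x) \<in> (adj c)\<^sup>*" for x
    using that
  proof (induction rule: rtrancl_induct)
    case base then show ?case using i2 .
  next
    case (step y z)
    have "{y, z} \<in> c" using step(2) unfolding adj_def by auto
    then have "{y, z} \<in> E" using cg gE unfolding is_component_def by auto
    then have "{y, z} \<in> h" using hE step(3) unfolding is_component_def by blast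
    then show ?case unfolding net_players_def by auto
  qed
  have "l \<in> links" using l cg gE El unfolding is_component_def by auto
  then obtain a b where lab: "l = {a, b}" using link_form by blast
  have "a \<in> net_players c" using l lab unfolding net_players_def by auto
  then have "(i, a) \<in> (adj c)\<^sup>*" using cg i1 unfolding is_component_def connected_net_def by blast
  then have "a \<in> net_players h" using reach by blast
  moreover have "{a, b} \<in> E" using l lab cg gE unfolding is_component_def by auto
  ultimately show "l \<in> h" using hE lab unfolding is_component_def by blast
qed

lemma comp_exists:
  assumes gl: "g \<subseteq> links" and i: "i \<in> net_players g"
  shows "\<exists>c. is_component c g \<and> i \<in> net_players c"
proof -
  define R where "R = (adj g)\<^sup>*"
  define c where "c = {l \<in> g. \<exists>x\<in>l. (i, x) \<in> R}"
  have symR: "sym R" unfolding R_def using adj_sym sym_rtrancl by blast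
  obtain l0 where l0: "l0 \<in> g" "i \<in> l0" using i unfolding net_players_def by auto
  have l0c: "l0 \<in> c" using l0 unfolding c_def R_def by auto
  have ic: "i \<in> net_players c" using l0c l0 unfolding net_players_def by auto
  have k1: "(i, x) \<in> R" if xc: "x \<in> net_players c" for x
  proof -
    obtain l where l: "l \<in> c" "x \<in> l" using xc unfolding net_players_def by auto
    then obtain y where y: "y \<in> l" "(i, y) \<in> R" unfolding c_def by auto
    have "l \<in> links" using l gl unfolding c_def by auto
    then obtain a b where lab: "l = {a, b}" using link_form by blast
    show ?thesis
    proof (cases "x = y")
      case True then show ?thesis using y by simp
    next
      case False
      then have "l = {y, x}" using lab l y by auto
      then have "(y, x) \<in> adj g" using l unfolding adj_def c_def by auto
      then show ?thesis using y unfolding R_def by (meson rtrancl_into_rtrancl)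
    qed
  qed
  have k2: "(i, x) \<in> (adj c)\<^sup>*" if "(i, x) \<in> R" for x
    using that unfolding R_def
  proof (induction rule: rtrancl_induct)
    case base then show ?case by simp
  next
    case (step y z)
    have "{y, z} \<in> g" using step(2) unfolding adj_def by auto
    then have "{y, z} \<in> c" using step(1) unfolding c_def R_def by auto
    then have "(y, z) \<in> adj c" unfolding adj_def by auto
    then show ?case using step(3) by (meson rtrancl_into_rtrancl)
  qed
  have symc: "sym ((adj c)\<^sup>*)" using adj_sym sym_rtrancl by blast
  have conn: "connected_net c"
    unfolding connected_net_def
  proof (intro ballI)
    fix j k assume j: "j \<in> net_players c" and k: "k \<in> net_players c"
    have "(i, j) \<in> (adj c)\<^sup>*" using k1[OF j] k2 by blast
    then have "(j, i) \<in> (adj c)\<^sup>*" using symc unfolding sym_def by blast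
    moreover have "(i, k) \<in> (adj c)\<^sup>*" using k1[OF k] k2 by blast
    ultimately show "(j, k) \<in> (adj c)\<^sup>*" by (meson rtrancl_trans)
  qed
  have maxi: "\<forall>j k. j \<in> net_players c \<longrightarrow> {j, k} \<in> g \<longrightarrow> {j, k} \<in> c"
    using k1 unfolding c_def by blast
  have "is_component c g"
    unfolding is_component_def using l0c conn maxi unfolding c_def by blast
  then show ?thesis using ic by blast
qed

lemma comp_disj:
  assumes gl: "g \<subseteq> links" and c1: "is_component c1 g" and c2: "is_component c2 g"
    and ne: "c1 \<noteq> c2"
  shows "net_players c1 \<inter> net_players c2 = {}"
proof (rule ccontr)
  assume "net_players c1 \<inter> net_players c2 \<noteq> {}"
  then obtain i where "i \<in> net_players c1" "i \<in> net_players c2" by auto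
  then have "c1 \<subseteq> c2" "c2 \<subseteq> c1"
    using comp_sub[of g g c2 c1 i] comp_sub[of g g c1 c2 i] c1 c2 gl by auto
  then show False using ne by auto
qed

lemma finite_all: "finite (A :: ('n::finite) set set set)"
  by simp

lemma inner:
  fixes Y :: "('n::finite) alloc_rule" and v :: "'n game"
  assumes Y1: "allocation_rule Y" and Y2: "component_balanced Y"
    and v1: "network_game v" and v2: "component_additive v"
    and g: "g \<in> networks" and E: "E \<in> networks" and gE: "g \<subseteq> E"
    and h: "h \<in> components E"
  shows "(\<Sum>i\<in>net_players h. Y v g i) = v (g \<inter> h)"
proof -
  have gl: "g \<subseteq> links" using g unfolding networks_def by auto
  have El: "E \<subseteq> links" using E unfolding networks_def by auto
  have hE: "is_component h E" using h unfolding components_def by simp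
  define K where "K = {c \<in> components g. c \<subseteq> h}"
  have finN: "finite (net_players x)" for x :: "'n network" by simp
  have CK: "components (g \<inter> h) = K"
  proof (intro set_eqI iffI)
    fix c assume "c \<in> components (g \<inter> h)"
    then have c: "is_component c (g \<inter> h)" unfolding components_def by auto
    have "is_component c g" unfolding is_component_def
    proof (intro conjI allI impI)
      show "c \<noteq> {}" "c \<subseteq> g" "connected_net c" using c unfolding is_component_def by auto
    next
      fix i j assume i: "i \<in> net_players c" and ij: "{i, j} \<in> g"
      have "i \<in> net_players h" using i c unfolding is_component_def net_players_def by auto
      then have "{i, j} \<in> h" using hE ij gE unfolding is_component_def by blast
      then show "{i, j} \<in> c" using c i ij unfolding is_component_def by blast
    qed
    moreover have "c \<subseteq> h" using c unfolding is_component_def by auto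
    ultimately show "c \<in> K" unfolding K_def components_def by auto
  next
    fix c assume "c \<in> K"
    then have c: "is_component c g" "c \<subseteq> h" unfolding K_def components_def by auto
    have "is_component c (g \<inter> h)" using c unfolding is_component_def by blast
    then show "c \<in> components (g \<inter> h)" unfolding components_def by auto
  qed
  have gh: "g \<inter> h \<in> networks" using gl unfolding networks_def by auto
  have vgh: "v (g \<inter> h) = (\<Sum>c\<in>K. v c)" 
  proof -
    have "v (g \<inter> h) = (\<Sum>c\<in>components (g \<inter> h). v c)"
      using v2[unfolded component_additive_def] gh by (rule bspec)
    then show ?thesis using CK by simp
  qed
  have Kv: "(\<Sum>i\<in>net_players c. Y v g i) = v c" if "c \<in> K" for c
  proof -
    have cK: "c \<in> components g" using that unfolding K_def by blast
    show ?thesis using Y2[unfolded component_balanced_def, rule_format, OF v1 v2 g cK] .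
  qed
  have U: "net_players h \<inter> net_players g = (\<Union>c\<in>K. net_players c)"
  proof (intro set_eqI iffI)
    fix i assume i: "i \<in> net_players h \<inter> net_players g"
    then have ih: "i \<in> net_players h" and ig: "i \<in> net_players g" by simp_all
    obtain c where c: "is_component c g" "i \<in> net_players c" using comp_exists[OF gl ig] by blast
    have "c \<subseteq> h" using comp_sub[OF gE hE c(1) c(2) ih El] .
    then have "c \<in> K" using c(1) unfolding K_def components_def by simp
    then show "i \<in> (\<Union>c\<in>K. net_players c)" using c(2) by blast
  next
    fix i assume "i \<in> (\<Union>c\<in>K. net_players c)"
    then obtain c where cK: "c \<in> K" and ic: "i \<in> net_players c" by blast
    have "c \<subseteq> h" "c \<subseteq> g" using cK unfolding K_def components_def is_component_def by simp_all
    then have "net_players c \<subseteq> net_players h" "net_players c \<subseteq> net_players g"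
      unfolding net_players_def by blast+
    then show "i \<in> net_players h \<inter> net_players g" using ic by blast
  qed
  have "(\<Sum>i\<in>net_players h. Y v g i) = (\<Sum>i\<in>net_players h \<inter> net_players g. Y v g i)"
  proof (rule sum.mono_neutral_right)
    show "\<forall>i\<in>net_players h - net_players h \<inter> net_players g. Y v g i = 0"
      using Y1 v1 g unfolding allocation_rule_def isolated_def by blast
  qed auto
  also have "\<dots> = (\<Sum>c\<in>K. \<Sum>i\<in>net_players c. Y v g i)"
  proof -
    have fK: "finite K" by simp
    have fN: "\<forall>c\<in>K. finite (net_players c)" by simp
    have dj: "\<forall>A\<in>K. \<forall>B\<in>K. A \<noteq> B \<longrightarrow> net_players A \<inter> net_players B = {}"
      unfolding K_def components_def using comp_disj[OF gl] by blast
    show ?thesis unfolding U using sum.UNION_disjoint[OF fK fN dj, of "\<lambda>i. Y v g i"] .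
  qed
  also have "\<dots> = (\<Sum>c\<in>K. v c)" using Kv by simp
  finally show ?thesis using vgh by simp
qed

theorem proposition5:
  fixes Y :: "('n::finite) alloc_rule" and v :: "'n game" and \<rho> :: "'n network \<Rightarrow> real"
    and h :: "'n network"
  assumes "allocation_rule Y"
    and "component_balanced Y"
    and "network_game v"
    and "component_additive v"
    and "nfpd \<rho>"
    and "h \<in> components (extent \<rho>)"
  shows "(\<Sum>i\<in>net_players h. standard_extension Y v \<rho> i)
           = (\<Sum>g\<in>support \<rho>. \<rho> g * v (g \<inter> h))"
proof -
  have E: "extent \<rho> \<in> networks"
    unfolding extent_def support_def networks_def by auto
  have "(\<Sum>i\<in>net_players h. standard_extension Y v \<rho> i)
      = (\<Sum>g\<in>networks. \<rho> g * (\<Sum>i\<in>net_players h. Y v g i))"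
    unfolding standard_extension_def sum_distrib_left by (rule sum.swap)
  also have "\<dots> = (\<Sum>g\<in>support \<rho>. \<rho> g * (\<Sum>i\<in>net_players h. Y v g i))"
  proof -
    have sub: "support \<rho> \<subseteq> networks" unfolding support_def by auto
    have z: "\<forall>g\<in>networks - support \<rho>. \<rho> g * (\<Sum>i\<in>net_players h. Y v g i) = 0"
    proof
      fix g assume g: "g \<in> networks - support \<rho>"
      have "\<rho> g \<ge> 0" using assms(5) unfolding nfpd_def by blast
      moreover have "\<not> \<rho> g > 0" using g unfolding support_def by auto
      ultimately have "\<rho> g = 0" by simp
      then show "\<rho> g * (\<Sum>i\<in>net_players h. Y v g i) = 0" by simp
    qed
    show ?thesis using sum.mono_neutral_left[OF _ sub z] by simp
  qed
  also have "\<dots> = (\<Sum>g\<in>support \<rho>. \<rho> g * v (g \<inter> h))"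
  proof (rule sum.cong)
    fix g assume g: "g \<in> support \<rho>"
    have "g \<in> networks" "g \<subseteq> extent \<rho>" using g unfolding support_def extent_def by auto
    then show "\<rho> g * (\<Sum>i\<in>net_players h. Y v g i) = \<rho> g * v (g \<inter> h)"
      using inner[OF assms(1-4) _ E _ assms(6)] by simp
  qed simp
  finally show ?thesis .
qed

end
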